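(* Let $V$ be a $\mathfrak g[t]$-module and $v\in V$ such that $(x_2\otimes t^r)v=0$ for all $r\ge0$, $(h\otimes t^p)v=0$ for all $h\in\mathfrak h$ and all $p\in\mathbb N$ ($p\ge1$), and $Y_2(r,s)v=0$ for all $r,s\in\mathbb Z_+$ with $r+s\ge N$, for some $N\in\mathbb N$. Suppose $(y_2\otimes t^{j+1})v=0$ for some $j\in\mathbb N$. Then for $k\in\mathbb Z_+$: (i) $Y_2(r,s)(y_2\otimes t^j)^kv=0$ for all $r+s\ge N-2k$; (ii) if moreover $(y_3\otimes t^{b+j})v=0$ for some $b\in\mathbb N$ and $(y_1\otimes t^r)v=0$ for all $r\ge0$, then $Y_2(r,s)(y_2\otimes t^j)^k(y_3\otimes t^b)v=0$ for all $r+s\ge N-2k-1$; (iii) if moreover $(x_1\otimes t^{a+j})v=0$ for some $a\in\mathbb N$ and $(x_3\otimes t^r)v=0$ for all $r\ge0$, then $Y_2(r,s)(y_2\otimes t^j)^k(x_1\otimes t^a)v=0$ for all $r+s\ge N-2k-1$; (iv) if moreover $(x_1\otimes t^{a+j})v=0$ and $(y_3\otimes t^{b+j})v=0$ for some $a,b\in\mathbb N$, and $(y_1\otimes t^r)v=0=(x_3\otimes t^r)v$ for all $r\ge0$, then $Y_2(r,s)(y_2\otimes t^j)^k(x_1\otimes t^a)(y_3\otimes t^b)v=0$ for all $r+s\ge N-2k-2$.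
   Context: $\mathfrak g=\mathfrak{sl}(1|2)$ is the Lie superalgebra of $3\times3$ complex supertrace-zero matrices with superbracket $[A,B]=AB-(-1)^{|A||B|}BA$; $x_1=E_{12},x_2=E_{23},x_3=E_{13},y_1=E_{21},y_2=E_{32},y_3=E_{31}$ ($x_2,y_2$ even, the others odd); $\mathfrak h=\operatorname{span}\{E_{11}+E_{22},E_{22}-E_{33}\}$; $\mathfrak g[t]=\mathfrak g\otimes\mathbb C[t]$ with $[a\otimes t^r,b\otimes t^s]=[a,b]\otimes t^{r+s}$. For $u\in U(\mathfrak g[t])$, $u^{(k)}=u^k/k!$, and $Y_2(r,s)=(x_2\otimes t)^{(s)}(y_2\otimes1)^{(r+s)}$ for $r,s\in\mathbb Z_+$. *)

theory Defs
  imports "HOL-Analysis.Analysis"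
begin

section \<open>The Lie superalgebra sl(1|2) as 3x3 complex matrices\<close>

type_synonym mat3 = "complex^3^3"

definition E :: "3 \<Rightarrow> 3 \<Rightarrow> mat3" where
  "E i j = (\<chi> k l. if k = i \<and> l = j then 1 else 0)"

definition msc :: "complex \<Rightarrow> mat3 \<Rightarrow> mat3" where
  "msc c A = (\<chi> i j. c * A $ i $ j)"

definition ipar :: "3 \<Rightarrow> bool" where
  "ipar i = (i \<noteq> 1)"

text \<open>Homogeneous matrices: hom A False = even, hom A True = odd.\<close>
definition hom :: "mat3 \<Rightarrow> bool \<Rightarrow> bool" where
  "hom A p = (\<forall>i j. (ipar i \<noteq> ipar j) \<noteq> p \<longrightarrow> A $ i $ j = 0)"

definition str :: "mat3 \<Rightarrow> complex" where
  "str A = A $ 1 $ 1 - A $ 2 $ 2 - A $ 3 $ 3"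

definition sl12 :: "mat3 set" where
  "sl12 = {A. str A = 0}"

text \<open>Superbracket of homogeneous A (parity p) and B (parity q).\<close>
definition sbr :: "bool \<Rightarrow> bool \<Rightarrow> mat3 \<Rightarrow> mat3 \<Rightarrow> mat3" where
  "sbr p q A B = (if p \<and> q then A ** B + B ** A else A ** B - B ** A)"

definition x1 :: mat3 where "x1 = E 1 2"
definition x2 :: mat3 where "x2 = E 2 3"
definition x3 :: mat3 where "x3 = E 1 3"
definition y1 :: mat3 where "y1 = E 2 1"
definition y2 :: mat3 where "y2 = E 3 2"
definition y3 :: mat3 where "y3 = E 3 1"

definition hsub :: "mat3 set" where
  "hsub = {msc c (E 1 1 + E 2 2) + msc d (E 2 2 - E 3 3) | c d. True}"

text \<open>A g[t]-module: a complex vector space (scalar multiplication sc) together with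
  act a r = the action of a \<otimes> t^r, complex-linear in a \<in> sl(1|2) and in the vector,
  satisfying [a\<otimes>t^r, b\<otimes>t^s] = [a,b]\<otimes>t^(r+s) acting as the supercommutator
  (i.e. a module over U(g[t])).\<close>
definition gt_module ::
  "(complex \<Rightarrow> 'v::ab_group_add \<Rightarrow> 'v) \<Rightarrow> (mat3 \<Rightarrow> nat \<Rightarrow> 'v \<Rightarrow> 'v) \<Rightarrow> bool" where
  "gt_module sc act \<longleftrightarrow>
     module sc \<and>
     (\<forall>a r u w. a \<in> sl12 \<longrightarrow> act a r (u + w) = act a r u + act a r w) \<and>
     (\<forall>a r c u. a \<in> sl12 \<longrightarrow> act a r (sc c u) = sc c (act a r u)) \<and>
     (\<forall>a b r u. a \<in> sl12 \<longrightarrow> b \<in> sl12 \<longrightarrow> act (a + b) r u = act a r u + act b r u) \<and>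
     (\<forall>a c r u. a \<in> sl12 \<longrightarrow> act (msc c a) r u = sc c (act a r u)) \<and>
     (\<forall>a b p q r s u. a \<in> sl12 \<longrightarrow> b \<in> sl12 \<longrightarrow> hom a p \<longrightarrow> hom b q \<longrightarrow>
        act (sbr p q a b) (r + s) u =
          (if p \<and> q then act a r (act b s u) + act b s (act a r u)
           else act a r (act b s u) - act b s (act a r u)))"

text \<open>Y_2(r,s) = (x2\<otimes>t)^(s) (y2\<otimes>1)^(r+s), divided powers u^(k) = u^k/k!.\<close>
definition Y2 :: "(complex \<Rightarrow> 'v \<Rightarrow> 'v) \<Rightarrow> (mat3 \<Rightarrow> nat \<Rightarrow> 'v \<Rightarrow> 'v) \<Rightarrow> nat \<Rightarrow> nat \<Rightarrow> 'v \<Rightarrow> 'v" where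
  "Y2 sc act r s w =
     sc (1 / (of_nat (fact s) * of_nat (fact (r + s))))
        ((act x2 1 ^^ s) ((act y2 0 ^^ (r + s)) w))"

end

theory Submission
  imports Defs
begin

lemmas msimps = vec_eq_iff forall_3 sum_3 matrix_matrix_mult_def E_def msc_def x1_def x2_def
  x3_def y1_def y2_def y3_def sbr_def hom_def ipar_def sl12_def str_def

definition hH :: mat3 where "hH = E 2 2 - E 3 3"
definition hP :: mat3 where "hP = E 1 1 + E 3 3"

lemma sl_facts: "x1 \<in> sl12" "x2 \<in> sl12" "x3 \<in> sl12" "y1 \<in> sl12" "y2 \<in> sl12" "y3 \<in> sl12"
  "hH \<in> sl12" "hP \<in> sl12" "(0::mat3) \<in> sl12"
  by (simp_all add: msimps hH_def hP_def)

lemma hom_facts: "hom x1 True" "hom x2 False" "hom x3 True" "hom y1 True" "hom y2 False" "hom y3 True"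
  "hom hH False" "hom hP False"
  by (simp_all add: msimps hH_def hP_def)

lemma hsub_facts: "hH \<in> hsub" "hP \<in> hsub"
proof -
  show "hH \<in> hsub" unfolding hsub_def
    apply simp apply (rule exI[of _ 0], rule exI[of _ 1]) by (simp add: msimps hH_def)
  show "hP \<in> hsub" unfolding hsub_def
    apply simp apply (rule exI[of _ 1], rule exI[of _ "-1"]) by (simp add: msimps hP_def)
qed

lemma br_facts:
  "sbr False False x2 y2 = hH"
  "sbr False False hH y2 = msc (-2) y2"
  "sbr False False y2 y2 = 0"
  "sbr False False x2 x2 = 0"
  "sbr False True y2 y1 = y3"
  "sbr False True y2 y3 = 0"
  "sbr False True x2 y1 = 0"
  "sbr True False x3 y2 = x1"
  "sbr False True y2 x1 = 0"
  "sbr False True x2 x3 = 0"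
  "sbr True True x3 y3 = hP"
  "sbr False False hP y2 = y2"
  by (simp_all add: msimps hH_def hP_def)

lemma it_comm: "(\<And>u. f (g u) = g (f u)) \<Longrightarrow> f ((g ^^ n) u) = (g ^^ n) (f u)"
  by (induction n) auto

locale gtm =
  fixes sc :: "complex \<Rightarrow> 'v::ab_group_add \<Rightarrow> 'v" and act :: "mat3 \<Rightarrow> nat \<Rightarrow> 'v \<Rightarrow> 'v"
  assumes gm: "gt_module sc act"
begin

lemma md: "module sc" using gm unfolding gt_module_def by blast

sublocale M: module sc by (rule md)

lemma aadd: "a \<in> sl12 \<Longrightarrow> act a r (u + w) = act a r u + act a r w"
  using gm unfolding gt_module_def by simp

lemma ascal: "a \<in> sl12 \<Longrightarrow> act a r (sc c u) = sc c (act a r u)"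
  using gm unfolding gt_module_def by simp

lemma amsc: "a \<in> sl12 \<Longrightarrow> act (msc c a) r u = sc c (act a r u)"
  using gm unfolding gt_module_def by simp

lemma abr: "a \<in> sl12 \<Longrightarrow> b \<in> sl12 \<Longrightarrow> hom a p \<Longrightarrow> hom b q \<Longrightarrow>
        act (sbr p q a b) (r + s) u =
          (if p \<and> q then act a r (act b s u) + act b s (act a r u)
           else act a r (act b s u) - act b s (act a r u))"
  using gm unfolding gt_module_def by simp

lemma azero: "a \<in> sl12 \<Longrightarrow> act a r 0 = 0"
  using aadd[of a r 0 0] by simp

lemma aneg: "a \<in> sl12 \<Longrightarrow> act a r (- u) = - act a r u"
  using aadd[of a r u "- u"] azero[of a r] by (simp add: eq_neg_iff_add_eq_0 add.commute)

lemma azeromat: "act 0 r u = 0"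
  using gm unfolding gt_module_def
  by (metis add.right_neutral add_cancel_right_right sl_facts(9))

lemma it_sc: "a \<in> sl12 \<Longrightarrow> (act a r ^^ n) (sc c u) = sc c ((act a r ^^ n) u)"
  by (rule it_comm[symmetric]) (simp add: ascal)

lemma it_neg: "a \<in> sl12 \<Longrightarrow> (act a r ^^ n) (- u) = - ((act a r ^^ n) u)"
  by (rule it_comm[symmetric]) (simp add: aneg)

lemma it_zero: "a \<in> sl12 \<Longrightarrow> (act a r ^^ n) 0 = 0"
  by (induction n) (simp_all add: azero)

lemmas S = sl_facts hom_facts

lemma C1: "act x2 r (act y2 s u) = act y2 s (act x2 r u) + act hH (r+s) u"
  using abr[OF S(2) S(5) S(11) S(14), of r s u] br_facts(1) by simp

lemma C2: "act hH r (act y2 s u) = act y2 s (act hH r u) + sc (-2) (act y2 (r+s) u)"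
  using abr[OF S(7) S(5) S(16) S(14), of r s u] br_facts(2) amsc[OF S(5)] by simp

lemma C3: "act y2 r (act y2 s u) = act y2 s (act y2 r u)"
  using abr[OF S(5) S(5) S(14) S(14), of r s u] br_facts(3) azeromat by simp

lemma C4: "act x2 r (act x2 s u) = act x2 s (act x2 r u)"
  using abr[OF S(2) S(2) S(11) S(11), of r s u] br_facts(4) azeromat by simp

lemma C5: "act y1 r (act y2 s u) = act y2 s (act y1 r u) - act y3 (s+r) u"
  using abr[OF S(5) S(4) S(14) S(13), of s r u] br_facts(5) by simp

lemma C6: "act y3 r (act y2 s u) = act y2 s (act y3 r u)"
  using abr[OF S(5) S(6) S(14) S(15), of s r u] br_facts(6) azeromat by simp

lemma C7: "act y1 r (act x2 s u) = act x2 s (act y1 r u)"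
  using abr[OF S(2) S(4) S(11) S(13), of s r u] br_facts(7) azeromat by simp

lemma C8: "act x3 r (act y2 s u) = act y2 s (act x3 r u) + act x1 (r+s) u"
  using abr[OF S(3) S(5) S(12) S(14), of r s u] br_facts(8) by simp

lemma C9: "act x1 r (act y2 s u) = act y2 s (act x1 r u)"
  using abr[OF S(5) S(1) S(14) S(10), of s r u] br_facts(9) azeromat by simp

lemma C10: "act x3 r (act x2 s u) = act x2 s (act x3 r u)"
  using abr[OF S(2) S(3) S(11) S(12), of s r u] br_facts(10) azeromat by simp

lemma C11: "act x3 r (act y3 s u) = act hP (r+s) u - act y3 s (act x3 r u)"
  using abr[OF S(3) S(6) S(12) S(15), of r s u] br_facts(11) by simp

lemma C12: "act hP r (act y2 s u) = act y2 s (act hP r u) + act y2 (r+s) u"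
  using abr[OF S(8) S(5) S(17) S(14), of r s u] br_facts(12) by simp

lemma Ha: assumes "act hH j u = 0"
  shows "act hH j ((act y2 0 ^^ m) u) = - sc (of_nat (2*m)) (act y2 j ((act y2 0 ^^ (m-1)) u))"
proof (induction m)
  case 0 show ?case using assms by simp
next
  case (Suc m)
  have e1: "act y2 0 (act hH j ((act y2 0 ^^ m) u)) = - sc (of_nat (2*m)) (act y2 j ((act y2 0 ^^ m) u))"
  proof (cases "m = 0")
    case True thus ?thesis using assms by (simp add: azero S)
  next
    case False
    then obtain m' where m': "m = Suc m'" by (cases m) auto
    have "act y2 0 (act hH j ((act y2 0 ^^ m) u)) = act y2 0 (- sc (of_nat (2*m)) (act y2 j ((act y2 0 ^^ m') u)))"
      using Suc.IH m' by simp
    also have "\<dots> = - sc (of_nat (2*m)) (act y2 j (act y2 0 ((act y2 0 ^^ m') u)))"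
      by (simp add: aneg ascal C3 S)
    also have "\<dots> = - sc (of_nat (2*m)) (act y2 j ((act y2 0 ^^ m) u))" using m' by simp
    finally show ?thesis .
  qed
  have "act hH j ((act y2 0 ^^ Suc m) u) = act y2 0 (act hH j ((act y2 0 ^^ m) u)) + sc (-2) (act y2 j ((act y2 0 ^^ m) u))"
    using C2[of j 0 "(act y2 0 ^^ m) u"] by simp
  also have "\<dots> = - sc (of_nat (2*m)) (act y2 j ((act y2 0 ^^ m) u)) - sc 2 (act y2 j ((act y2 0 ^^ m) u))"
    using e1 by (simp add: M.scale_minus_left)
  also have "\<dots> = - sc (of_nat (2*m) + 2) (act y2 j ((act y2 0 ^^ m) u))"
    by (simp add: M.scale_left_distrib)
  also have "\<dots> = - sc (of_nat (2*Suc m)) (act y2 j ((act y2 0 ^^ (Suc m - 1)) u))"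
    by (simp add: add.commute)
  finally show ?case .
qed

lemma Xa: assumes "act x2 j u = 0" "act hH j u = 0"
  shows "act x2 j ((act y2 0 ^^ m) u) = - sc (of_nat (m*(m-1))) (act y2 j ((act y2 0 ^^ (m-2)) u))"
proof (induction m)
  case 0 show ?case using assms by simp
next
  case (Suc m)
  have e1: "act y2 0 (act x2 j ((act y2 0 ^^ m) u)) = - sc (of_nat (m*(m-1))) (act y2 j ((act y2 0 ^^ (m-1)) u))"
  proof (cases "m < 2")
    case True
    then have z: "(of_nat (m*(m-1)) :: complex) = 0" by (cases m) auto
    show ?thesis using Suc.IH unfolding z by (simp add: azero S)
  next
    case False
    then obtain m' where m': "m = Suc (Suc m')" by (cases m; cases "m - 1") auto
    have "act y2 0 (act x2 j ((act y2 0 ^^ m) u)) = act y2 0 (- sc (of_nat (m*(m-1))) (act y2 j ((act y2 0 ^^ m') u)))"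
      using Suc.IH m' by simp
    also have "\<dots> = - sc (of_nat (m*(m-1))) (act y2 j (act y2 0 ((act y2 0 ^^ m') u)))"
      by (simp add: aneg ascal C3 S)
    also have "\<dots> = - sc (of_nat (m*(m-1))) (act y2 j ((act y2 0 ^^ (m-1)) u))" using m' by simp
    finally show ?thesis .
  qed
  have "act x2 j ((act y2 0 ^^ Suc m) u) = act y2 0 (act x2 j ((act y2 0 ^^ m) u)) + act hH j ((act y2 0 ^^ m) u)"
    using C1[of j 0 "(act y2 0 ^^ m) u"] by simp
  also have "\<dots> = - sc (of_nat (m*(m-1))) (act y2 j ((act y2 0 ^^ (m-1)) u)) - sc (of_nat (2*m)) (act y2 j ((act y2 0 ^^ (m-1)) u))"
    using e1 Ha[OF assms(2), of m] by simp
  also have "\<dots> = - sc (of_nat (m*(m-1)) + of_nat (2*m)) (act y2 j ((act y2 0 ^^ (m-1)) u))"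
    by (simp add: M.scale_left_distrib)
  also have "of_nat (m*(m-1)) + of_nat (2*m) = (of_nat (Suc m * (Suc m - 1)) :: complex)"
  proof -
    have "m*(m-1) + 2*m = Suc m * (Suc m - 1)" by (cases m) (auto simp: algebra_simps)
    thus ?thesis by (metis of_nat_add)
  qed
  finally show ?case by simp
qed

lemma Ya: assumes "act y1 b u = 0"
  shows "act y1 b ((act y2 0 ^^ m) u) = - sc (of_nat m) (act y3 b ((act y2 0 ^^ (m-1)) u))"
proof (induction m)
  case 0 show ?case using assms by simp
next
  case (Suc m)
  have e1: "act y2 0 (act y1 b ((act y2 0 ^^ m) u)) = - sc (of_nat m) (act y3 b ((act y2 0 ^^ m) u))"
  proof (cases "m = 0")
    case True thus ?thesis using assms by (simp add: azero S)
  next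
    case False
    then obtain m' where m': "m = Suc m'" by (cases m) auto
    have "act y2 0 (act y1 b ((act y2 0 ^^ m) u)) = act y2 0 (- sc (of_nat m) (act y3 b ((act y2 0 ^^ m') u)))"
      using Suc.IH m' by simp
    also have "\<dots> = - sc (of_nat m) (act y3 b (act y2 0 ((act y2 0 ^^ m') u)))"
      by (simp add: aneg ascal C6 S)
    also have "\<dots> = - sc (of_nat m) (act y3 b ((act y2 0 ^^ m) u))" using m' by simp
    finally show ?thesis .
  qed
  have "act y1 b ((act y2 0 ^^ Suc m) u) = act y2 0 (act y1 b ((act y2 0 ^^ m) u)) - act y3 b ((act y2 0 ^^ m) u)"
    using C5[of b 0 "(act y2 0 ^^ m) u"] by simp
  also have "\<dots> = - sc (of_nat m) (act y3 b ((act y2 0 ^^ m) u)) - sc 1 (act y3 b ((act y2 0 ^^ m) u))"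
    using e1 by simp
  also have "\<dots> = - sc (of_nat m + 1) (act y3 b ((act y2 0 ^^ m) u))"
    by (simp add: M.scale_left_distrib)
  finally show ?case by (simp add: add.commute)
qed

lemma Za: assumes "act x3 a u = 0"
  shows "act x3 a ((act y2 0 ^^ m) u) = sc (of_nat m) (act x1 a ((act y2 0 ^^ (m-1)) u))"
proof (induction m)
  case 0 show ?case using assms by simp
next
  case (Suc m)
  have e1: "act y2 0 (act x3 a ((act y2 0 ^^ m) u)) = sc (of_nat m) (act x1 a ((act y2 0 ^^ m) u))"
  proof (cases "m = 0")
    case True thus ?thesis using assms by (simp add: azero S)
  next
    case False
    then obtain m' where m': "m = Suc m'" by (cases m) auto
    have "act y2 0 (act x3 a ((act y2 0 ^^ m) u)) = act y2 0 (sc (of_nat m) (act x1 a ((act y2 0 ^^ m') u)))"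
      using Suc.IH m' by simp
    also have "\<dots> = sc (of_nat m) (act x1 a (act y2 0 ((act y2 0 ^^ m') u)))"
      by (simp add: ascal C9 S)
    also have "\<dots> = sc (of_nat m) (act x1 a ((act y2 0 ^^ m) u))" using m' by simp
    finally show ?thesis .
  qed
  have "act x3 a ((act y2 0 ^^ Suc m) u) = act y2 0 (act x3 a ((act y2 0 ^^ m) u)) + act x1 a ((act y2 0 ^^ m) u)"
    using C8[of a 0 "(act y2 0 ^^ m) u"] by simp
  also have "\<dots> = sc (of_nat m) (act x1 a ((act y2 0 ^^ m) u)) + sc 1 (act x1 a ((act y2 0 ^^ m) u))"
    using e1 by simp
  also have "\<dots> = sc (of_nat m + 1) (act x1 a ((act y2 0 ^^ m) u))"
    by (simp add: M.scale_left_distrib)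
  finally show ?case by (simp add: add.commute)
qed

lemma fact_eq2: "(1/(of_nat (fact s) * of_nat (fact n))) * (1/of_nat((n+2)*(n+1))) = (1::complex)/(of_nat (fact s) * of_nat (fact (n+2)))"
proof -
  have "fact (n+2) = (n+2)*(n+1)*(fact n::nat)" by (simp add: fact_Suc numeral_2_eq_2 algebra_simps)
  thus ?thesis by (simp add: field_simps)
qed

lemma fact_eq1: "(1/(of_nat (fact s) * of_nat (fact n))) * (1/of_nat(n+1)) = (1::complex)/(of_nat (fact s) * of_nat (fact (n+1)))"
proof -
  have "fact (n+1) = (n+1)*(fact n::nat)" by simp
  thus ?thesis by (simp add: field_simps)
qed

lemma sc_inv: "C \<noteq> 0 \<Longrightarrow> sc (1/C) (sc C X) = X"
  by (simp add: M.scale_scale)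

lemma G1: assumes "act x2 j u = 0" "act hH j u = 0"
  shows "Y2 sc act r s (act y2 j u) = - act x2 j (Y2 sc act (r+2) s u)"
proof -
  define n where "n = r+s"
  define Z where "Z = (act y2 0 ^^ (n+2)) u"
  have a: "(act y2 0 ^^ n) (act y2 j u) = act y2 j ((act y2 0 ^^ n) u)"
    by (rule it_comm[symmetric]) (simp add: C3)
  have b: "act x2 j Z = - sc (of_nat ((n+2)*(n+1))) (act y2 j ((act y2 0 ^^ n) u))"
    using Xa[OF assms, of "n+2"] by (simp add: Z_def)
  have c: "act y2 j ((act y2 0 ^^ n) u) = - sc (1/of_nat((n+2)*(n+1))) (act x2 j Z)"
  proof -
    have nz: "(of_nat ((n+2)*(n+1)) :: complex) \<noteq> 0" by (subst of_nat_eq_0_iff) simp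
    show ?thesis unfolding b M.scale_minus_right minus_minus sc_inv[OF nz] ..
  qed
  have d: "(act x2 1 ^^ s) (act x2 j Z) = act x2 j ((act x2 1 ^^ s) Z)"
    by (rule it_comm[symmetric]) (simp add: C4)
  have "Y2 sc act r s (act y2 j u) = sc (1/(of_nat (fact s) * of_nat (fact n))) ((act x2 1 ^^ s) (- sc (1/of_nat((n+2)*(n+1))) (act x2 j Z)))"
    unfolding Y2_def n_def[symmetric] a c ..
  also have "\<dots> = - sc ((1/(of_nat (fact s) * of_nat (fact n))) * (1/of_nat((n+2)*(n+1)))) (act x2 j ((act x2 1 ^^ s) Z))"
    by (simp only: it_neg[OF S(2)] it_sc[OF S(2)] d M.scale_scale M.scale_minus_right)
  also have "\<dots> = - act x2 j (Y2 sc act (r+2) s u)"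
  proof -
    have "r + 2 + s = n + 2" by (simp add: n_def)
    thus ?thesis unfolding Y2_def fact_eq2 by (simp add: ascal S Z_def)
  qed
  finally show ?thesis .
qed

lemma G2: assumes "act y1 b u = 0"
  shows "Y2 sc act r s (act y3 b u) = - act y1 b (Y2 sc act (r+1) s u)"
proof -
  define n where "n = r+s"
  define Z where "Z = (act y2 0 ^^ (n+1)) u"
  have a: "(act y2 0 ^^ n) (act y3 b u) = act y3 b ((act y2 0 ^^ n) u)"
    by (rule it_comm[symmetric]) (simp add: C6)
  have bb: "act y1 b Z = - sc (of_nat (n+1)) (act y3 b ((act y2 0 ^^ n) u))"
    using Ya[OF assms, of "n+1"] by (simp add: Z_def)
  have c: "act y3 b ((act y2 0 ^^ n) u) = - sc (1/of_nat(n+1)) (act y1 b Z)"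
  proof -
    have nz: "(of_nat (n+1) :: complex) \<noteq> 0" by (subst of_nat_eq_0_iff) simp
    show ?thesis by (simp only: bb M.scale_minus_right minus_minus sc_inv[OF nz])
  qed
  have d: "(act x2 1 ^^ s) (act y1 b Z) = act y1 b ((act x2 1 ^^ s) Z)"
    by (rule it_comm[symmetric]) (simp add: C7)
  have "Y2 sc act r s (act y3 b u) = sc (1/(of_nat (fact s) * of_nat (fact n))) ((act x2 1 ^^ s) (- sc (1/of_nat(n+1)) (act y1 b Z)))"
    unfolding Y2_def n_def[symmetric] a c ..
  also have "\<dots> = - sc ((1/(of_nat (fact s) * of_nat (fact n))) * (1/of_nat(n+1))) (act y1 b ((act x2 1 ^^ s) Z))"
    by (simp only: it_neg[OF S(2)] it_sc[OF S(2)] d M.scale_scale M.scale_minus_right)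
  also have "\<dots> = - act y1 b (Y2 sc act (r+1) s u)"
  proof -
    have "r + 1 + s = n + 1" by (simp add: n_def)
    thus ?thesis unfolding Y2_def fact_eq1 by (simp add: ascal S Z_def)
  qed
  finally show ?thesis .
qed

lemma G3: assumes "act x3 a u = 0"
  shows "Y2 sc act r s (act x1 a u) = act x3 a (Y2 sc act (r+1) s u)"
proof -
  define n where "n = r+s"
  define Z where "Z = (act y2 0 ^^ (n+1)) u"
  have aa: "(act y2 0 ^^ n) (act x1 a u) = act x1 a ((act y2 0 ^^ n) u)"
    by (rule it_comm[symmetric]) (simp add: C9)
  have bb: "act x3 a Z = sc (of_nat (n+1)) (act x1 a ((act y2 0 ^^ n) u))"
    using Za[OF assms, of "n+1"] by (simp add: Z_def)
  have c: "act x1 a ((act y2 0 ^^ n) u) = sc (1/of_nat(n+1)) (act x3 a Z)"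
  proof -
    have nz: "(of_nat (n+1) :: complex) \<noteq> 0" by (subst of_nat_eq_0_iff) simp
    show ?thesis by (simp only: bb sc_inv[OF nz])
  qed
  have d: "(act x2 1 ^^ s) (act x3 a Z) = act x3 a ((act x2 1 ^^ s) Z)"
    by (rule it_comm[symmetric]) (simp add: C10)
  have "Y2 sc act r s (act x1 a u) = sc (1/(of_nat (fact s) * of_nat (fact n))) ((act x2 1 ^^ s) (sc (1/of_nat(n+1)) (act x3 a Z)))"
    unfolding Y2_def n_def[symmetric] aa c ..
  also have "\<dots> = sc ((1/(of_nat (fact s) * of_nat (fact n))) * (1/of_nat(n+1))) (act x3 a ((act x2 1 ^^ s) Z))"
    by (simp only: it_sc[OF S(2)] d M.scale_scale)
  also have "\<dots> = act x3 a (Y2 sc act (r+1) s u)"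
  proof -
    have "r + 1 + s = n + 1" by (simp add: n_def)
    thus ?thesis unfolding Y2_def fact_eq1 by (simp add: ascal S Z_def)
  qed
  finally show ?thesis .
qed

lemma ym_v: assumes "\<forall>p\<ge>1. act hH p v = 0" "act y2 (j+1) v = 0" "m \<ge> j+1"
  shows "act y2 m v = 0"
proof (cases "m = j+1")
  case True thus ?thesis using assms by simp
next
  case False
  define q where "q = m - (j+1)"
  have q: "m = q + (j+1)" "q \<ge> 1" using False assms(3) by (auto simp: q_def)
  have hq: "act hH q v = 0" using assms(1) q(2) by blast
  have "act hH q (act y2 (j+1) v) = act y2 (j+1) (act hH q v) + sc (-2) (act y2 (q+(j+1)) v)"
    by (rule C2)
  hence e: "sc (-2) (act y2 m v) = 0" using assms(2) hq q(1) by (simp add: azero S)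
  have "act y2 m v = sc (1/(-2)) (sc (-2) (act y2 m v))" by (rule sc_inv[symmetric]) simp
  also have "\<dots> = 0" by (simp only: e M.scale_zero_right)
  finally show ?thesis .
qed

lemma yw: assumes "\<forall>m\<ge>j+1. act y2 m v = 0" "m \<ge> j+1"
  shows "act y2 m ((act y2 j ^^ k) v) = 0"
proof -
  have "act y2 m ((act y2 j ^^ k) v) = (act y2 j ^^ k) (act y2 m v)" by (rule it_comm) (rule C3)
  thus ?thesis using assms by (simp add: it_zero S)
qed

lemma hw: assumes "\<forall>m\<ge>j+1. act y2 m v = 0" "\<forall>p\<ge>1. act hH p v = 0" "q \<ge> 1"
  shows "act hH q ((act y2 j ^^ k) v) = 0"
proof (induction k)
  case 0 thus ?case using assms by simp
next
  case (Suc k)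
  have "act hH q ((act y2 j ^^ Suc k) v) = act y2 j (act hH q ((act y2 j ^^ k) v)) + sc (-2) (act y2 (q+j) ((act y2 j ^^ k) v))"
    using C2[of q j] by simp
  also have "\<dots> = 0" using Suc.IH yw[OF assms(1), of "q+j" k] assms(3) by (simp add: azero S)
  finally show ?case .
qed

lemma Pw: assumes "\<forall>m\<ge>j+1. act y2 m v = 0" "\<forall>p\<ge>1. act hP p v = 0" "q \<ge> 1"
  shows "act hP q ((act y2 j ^^ k) v) = 0"
proof (induction k)
  case 0 thus ?case using assms by simp
next
  case (Suc k)
  have "act hP q ((act y2 j ^^ Suc k) v) = act y2 j (act hP q ((act y2 j ^^ k) v)) + act y2 (q+j) ((act y2 j ^^ k) v)"
    using C12[of q j] by simp
  also have "\<dots> = 0" using Suc.IH yw[OF assms(1), of "q+j" k] assms(3) by (simp add: azero S)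
  finally show ?case .
qed

lemma xw: assumes "\<forall>m\<ge>j+1. act y2 m v = 0" "\<forall>p\<ge>1. act hH p v = 0" "\<forall>r. act x2 r v = 0" "j \<ge> 1"
  shows "act x2 r ((act y2 j ^^ k) v) = 0"
proof (induction k arbitrary: r)
  case 0 thus ?case using assms by simp
next
  case (Suc k)
  have "act x2 r ((act y2 j ^^ Suc k) v) = act y2 j (act x2 r ((act y2 j ^^ k) v)) + act hH (r+j) ((act y2 j ^^ k) v)"
    using C1[of r j] by simp
  also have "\<dots> = 0" using Suc.IH hw[OF assms(1,2), of "r+j" k] assms(4) by (simp add: azero S)
  finally show ?case .
qed

lemma y1w: assumes "\<forall>r. act y1 r v = 0" "act y3 (b+j) v = 0"
  shows "act y1 b ((act y2 j ^^ k) v) = 0"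
proof (induction k)
  case 0 thus ?case using assms by simp
next
  case (Suc k)
  have z: "act y3 (j+b) ((act y2 j ^^ k) v) = 0"
  proof -
    have "act y3 (j+b) ((act y2 j ^^ k) v) = (act y2 j ^^ k) (act y3 (j+b) v)" by (rule it_comm) (rule C6)
    thus ?thesis using assms(2) by (simp add: it_zero S add.commute)
  qed
  have "act y1 b ((act y2 j ^^ Suc k) v) = act y2 j (act y1 b ((act y2 j ^^ k) v)) - act y3 (j+b) ((act y2 j ^^ k) v)"
    using C5[of b j] by simp
  also have "\<dots> = 0" using Suc.IH z by (simp add: azero S)
  finally show ?case .
qed

lemma x3w: assumes "\<forall>r. act x3 r v = 0" "act x1 (a+j) v = 0"
  shows "act x3 a ((act y2 j ^^ k) v) = 0"
proof (induction k)
  case 0 thus ?case using assms by simp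
next
  case (Suc k)
  have z: "act x1 (a+j) ((act y2 j ^^ k) v) = 0"
  proof -
    have "act x1 (a+j) ((act y2 j ^^ k) v) = (act y2 j ^^ k) (act x1 (a+j) v)" by (rule it_comm) (rule C9)
    thus ?thesis using assms(2) by (simp add: it_zero S)
  qed
  have "act x3 a ((act y2 j ^^ Suc k) v) = act y2 j (act x3 a ((act y2 j ^^ k) v)) + act x1 (a+j) ((act y2 j ^^ k) v)"
    using C8[of a j] by simp
  also have "\<dots> = 0" using Suc.IH z by (simp add: azero S)
  finally show ?case .
qed

end


theorem mainTheorem4:
  fixes sc :: "complex \<Rightarrow> 'v::ab_group_add \<Rightarrow> 'v"
    and act :: "mat3 \<Rightarrow> nat \<Rightarrow> 'v \<Rightarrow> 'v"
    and v :: 'v and N j :: nat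
  assumes "gt_module sc act"
    and "\<forall>r. act x2 r v = 0"
    and "\<forall>h\<in>hsub. \<forall>p\<ge>1. act h p v = 0"
    and "N \<ge> 1"
    and "\<forall>r s. r + s \<ge> N \<longrightarrow> Y2 sc act r s v = 0"
    and "j \<ge> 1"
    and "act y2 (j + 1) v = 0"
  shows "\<forall>k::nat.
     (\<forall>r s. int (r + s) \<ge> int N - 2 * int k \<longrightarrow>
        Y2 sc act r s ((act y2 j ^^ k) v) = 0)
   \<and> (\<forall>b\<ge>1. act y3 (b + j) v = 0 \<longrightarrow> (\<forall>r. act y1 r v = 0) \<longrightarrow>
        (\<forall>r s. int (r + s) \<ge> int N - 2 * int k - 1 \<longrightarrow>
           Y2 sc act r s ((act y2 j ^^ k) (act y3 b v)) = 0))
   \<and> (\<forall>a\<ge>1. act x1 (a + j) v = 0 \<longrightarrow> (\<forall>r. act x3 r v = 0) \<longrightarrow>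
        (\<forall>r s. int (r + s) \<ge> int N - 2 * int k - 1 \<longrightarrow>
           Y2 sc act r s ((act y2 j ^^ k) (act x1 a v)) = 0))
   \<and> (\<forall>a\<ge>1. \<forall>b\<ge>1. act x1 (a + j) v = 0 \<longrightarrow> act y3 (b + j) v = 0 \<longrightarrow>
        (\<forall>r. act y1 r v = 0) \<longrightarrow> (\<forall>r. act x3 r v = 0) \<longrightarrow>
        (\<forall>r s. int (r + s) \<ge> int N - 2 * int k - 2 \<longrightarrow>
           Y2 sc act r s ((act y2 j ^^ k) (act x1 a (act y3 b v))) = 0))"
proof -
  interpret gtm sc act by unfold_locales (rule assms(1))
  have hHv: "\<forall>p\<ge>1. act hH p v = 0" using assms(3) hsub_facts(1) by blast
  have hPv: "\<forall>p\<ge>1. act hP p v = 0" using assms(3) hsub_facts(2) by blast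
  have yall: "\<forall>m\<ge>j+1. act y2 m v = 0" using ym_v[OF hHv assms(7)] by blast
  have xw': "act x2 r ((act y2 j ^^ k) v) = 0" for r k by (rule xw[OF yall hHv assms(2,6)])
  have hw': "act hH j ((act y2 j ^^ k) v) = 0" for k by (rule hw[OF yall hHv assms(6)])
  have p1: "\<forall>r s. int (r + s) \<ge> int N - 2 * int k \<longrightarrow> Y2 sc act r s ((act y2 j ^^ k) v) = 0" for k
  proof (induction k)
    case 0 thus ?case using assms(5) by auto
  next
    case (Suc k)
    show ?case
    proof (intro allI impI)
      fix r s assume h: "int (r + s) \<ge> int N - 2 * int (Suc k)"
      have "Y2 sc act r s ((act y2 j ^^ Suc k) v) = - act x2 j (Y2 sc act (r+2) s ((act y2 j ^^ k) v))"
        using G1[OF xw' hw'] by simp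
      also have "Y2 sc act (r+2) s ((act y2 j ^^ k) v) = 0" using Suc.IH h by auto
      finally show "Y2 sc act r s ((act y2 j ^^ Suc k) v) = 0" by (simp add: azero S)
    qed
  qed
  have p2: "\<forall>b\<ge>1. act y3 (b + j) v = 0 \<longrightarrow> (\<forall>r. act y1 r v = 0) \<longrightarrow>
        (\<forall>r s. int (r + s) \<ge> int N - 2 * int k - 1 \<longrightarrow>
           Y2 sc act r s ((act y2 j ^^ k) (act y3 b v)) = 0)" for k
  proof (intro allI impI)
    fix b r s assume b: "b \<ge> 1" "act y3 (b + j) v = 0" "\<forall>r. act y1 r v = 0"
      and h: "int (r + s) \<ge> int N - 2 * int k - 1"
    have c: "(act y2 j ^^ k) (act y3 b v) = act y3 b ((act y2 j ^^ k) v)"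
      by (rule it_comm[symmetric]) (rule C6)
    have "Y2 sc act r s ((act y2 j ^^ k) (act y3 b v)) = - act y1 b (Y2 sc act (r+1) s ((act y2 j ^^ k) v))"
      unfolding c by (rule G2[OF y1w[OF b(3,2)]])
    also have "Y2 sc act (r+1) s ((act y2 j ^^ k) v) = 0" using p1[of k] h by auto
    finally show "Y2 sc act r s ((act y2 j ^^ k) (act y3 b v)) = 0" by (simp add: azero S)
  qed
  have p3: "\<forall>a\<ge>1. act x1 (a + j) v = 0 \<longrightarrow> (\<forall>r. act x3 r v = 0) \<longrightarrow>
        (\<forall>r s. int (r + s) \<ge> int N - 2 * int k - 1 \<longrightarrow>
           Y2 sc act r s ((act y2 j ^^ k) (act x1 a v)) = 0)" for k
  proof (intro allI impI)
    fix a r s assume a: "a \<ge> 1" "act x1 (a + j) v = 0" "\<forall>r. act x3 r v = 0"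
      and h: "int (r + s) \<ge> int N - 2 * int k - 1"
    have c: "(act y2 j ^^ k) (act x1 a v) = act x1 a ((act y2 j ^^ k) v)"
      by (rule it_comm[symmetric]) (rule C9)
    have "Y2 sc act r s ((act y2 j ^^ k) (act x1 a v)) = act x3 a (Y2 sc act (r+1) s ((act y2 j ^^ k) v))"
      unfolding c by (rule G3[OF x3w[OF a(3,2)]])
    also have "Y2 sc act (r+1) s ((act y2 j ^^ k) v) = 0" using p1[of k] h by auto
    finally show "Y2 sc act r s ((act y2 j ^^ k) (act x1 a v)) = 0" by (simp add: azero S)
  qed
  have p4: "\<forall>a\<ge>1. \<forall>b\<ge>1. act x1 (a + j) v = 0 \<longrightarrow> act y3 (b + j) v = 0 \<longrightarrow>
        (\<forall>r. act y1 r v = 0) \<longrightarrow> (\<forall>r. act x3 r v = 0) \<longrightarrow>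
        (\<forall>r s. int (r + s) \<ge> int N - 2 * int k - 2 \<longrightarrow>
           Y2 sc act r s ((act y2 j ^^ k) (act x1 a (act y3 b v))) = 0)" for k
  proof (intro allI impI)
    fix a b r s assume a: "a \<ge> 1" and b: "b \<ge> 1" and ax: "act x1 (a + j) v = 0"
      and by3: "act y3 (b + j) v = 0" and y1v: "\<forall>r. act y1 r v = 0" and x3v: "\<forall>r. act x3 r v = 0"
      and h: "int (r + s) \<ge> int N - 2 * int k - 2"
    define w where "w = (act y2 j ^^ k) v"
    have c1: "(act y2 j ^^ k) (act y3 b v) = act y3 b w"
      unfolding w_def by (rule it_comm[symmetric]) (rule C6)
    have c: "(act y2 j ^^ k) (act x1 a (act y3 b v)) = act x1 a (act y3 b w)"
      unfolding c1[symmetric] by (rule it_comm[symmetric]) (rule C9)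
    have x3w': "act x3 a w = 0" unfolding w_def by (rule x3w[OF x3v ax])
    have pw: "act hP (a+b) w = 0" unfolding w_def by (rule Pw[OF yall hPv]) (use a in simp)
    have x3u: "act x3 a (act y3 b w) = 0" using C11[of a b w] x3w' pw by (simp add: azero S)
    have "Y2 sc act r s ((act y2 j ^^ k) (act x1 a (act y3 b v))) = act x3 a (Y2 sc act (r+1) s (act y3 b w))"
      unfolding c by (rule G3[OF x3u])
    also have "\<dots> = act x3 a (- act y1 b (Y2 sc act (r+1+1) s w))"
      by (simp only: G2[OF y1w[OF y1v by3, of k, folded w_def]])
    also have "Y2 sc act (r+1+1) s w = 0" using p1[of k] h unfolding w_def by auto
    finally show "Y2 sc act r s ((act y2 j ^^ k) (act x1 a (act y3 b v))) = 0" by (simp add: azero aneg S)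
  qed
  show ?thesis using p1 p2 p3 p4 by blast
qed

end
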